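(* Let $p$ be an odd prime and $n\ge2$ an integer with base-$p$ expansion $n=n_0+n_1p+\cdots+n_kp^k$, $n_j\in\{0,\ldots,p-1\}$, $n_k>0$. Then: (1) if it is not the case that $n_0=\cdots=n_{k-1}=p-1$, then $c^B_{p,i}(n)=c^B_{p,-i}(n)$ for all $i\in\mathbb{Z}_p$; (2) for each $i\in\mathbb{Z}_p$, $c^B_{p,i}(n)$ is divisible by $2^{\,n+2-\prod_{j=0}^k(n_j+1)}$ if $i=0$ or $n_0=\cdots=n_{k-1}=p-1$, and by $2^{\,n+1-\prod_{j=0}^k(n_j+1)}$ otherwise.
   Context: A signed permutation of $[n]$ is a bijection $w$ of $\{\pm1,\ldots,\pm n\}$ with $w(-i)=-w(i)$; these form $\mathfrak{S}^B_n$. With $w(0):=0$, $D(w)=\{i\in\{0,\ldots,n-1\}: w(i)>w(i+1)\}$. A pseudo-composition of $n$ ($\alpha\models_0 n$) is a sequence $(\alpha_1,\ldots,\alpha_\ell)$ of integers with $\alpha_1\ge0$, $\alpha_2,\ldots,\alpha_\ell>0$ and sum $n$, with $D(\alpha)=\{\alpha_1,\alpha_1+\alpha_2,\ldots,\alpha_1+\cdots+\alpha_{\ell-1}\}$. The type $B$ ribbon number is $r^B_\alpha=|\{w\in\mathfrak{S}^B_n: D(w)=D(\alpha)\}|$ and $c^B_{p,i}(n)=|\{\alpha\models_0 n: r^B_\alpha\equiv i\pmod p\}|$. *)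

theory Defs
  imports "HOL-Combinatorics.Permutations" "HOL-Number_Theory.Number_Theory"
begin

text \<open>Signed permutations of [n]: bijections w of {-n..n}-{0} (extended by the
identity elsewhere, in particular w 0 = 0) with w(-i) = -w(i).\<close>
definition signed_perms :: "nat \<Rightarrow> (int \<Rightarrow> int) set" where
  "signed_perms n = {w. w permutes ({- int n .. int n} - {0}) \<and> (\<forall>i. w (- i) = - w i)}"

definition descB :: "nat \<Rightarrow> (int \<Rightarrow> int) \<Rightarrow> nat set" where
  "descB n w = {i. i < n \<and> w (int i) > w (int i + 1)}"

definition pseudo_comps :: "nat \<Rightarrow> nat list set" where
  "pseudo_comps n = {\<alpha>. \<alpha> \<noteq> [] \<and> (\<forall>j. 0 < j \<and> j < length \<alpha> \<longrightarrow> 0 < \<alpha> ! j) \<and> sum_list \<alpha> = n}"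

definition desc_comp :: "nat list \<Rightarrow> nat set" where
  "desc_comp \<alpha> = {sum_list (take j \<alpha>) | j. 1 \<le> j \<and> j < length \<alpha>}"

definition ribbonB :: "nat \<Rightarrow> nat list \<Rightarrow> nat" where
  "ribbonB n \<alpha> = card {w \<in> signed_perms n. descB n w = desc_comp \<alpha>}"

definition cB :: "nat \<Rightarrow> int \<Rightarrow> nat \<Rightarrow> nat" where
  "cB p i n = card {\<alpha> \<in> pseudo_comps n. [int (ribbonB n \<alpha>) = i] (mod int p)}"

definition digit :: "nat \<Rightarrow> nat \<Rightarrow> nat \<Rightarrow> nat" where
  "digit p n j = (n div p ^ j) mod p"

end

theory Submission
  imports Defs
begin

lemma choose_step_mod:
  assumes p: "prime (p::nat)" and np: "p \<le> n"
  shows "[n choose s = ((n - p) choose s) + (if p \<le> s then (n - p) choose (s - p) else 0)] (mod p)"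
proof -
  have "n choose s = (\<Sum>k\<le>s. (p choose k) * ((n - p) choose (s - k)))"
    using vandermonde[of p "n-p" s] np by simp
  also have "[\<dots> = (\<Sum>k\<le>s. (if k = 0 then (n - p) choose s else if k = p then (n - p) choose (s - p) else 0))] (mod p)"
  proof (rule cong_sum)
    fix k assume "k \<in> {..s}"
    show "[(p choose k) * ((n - p) choose (s - k)) = (if k = 0 then (n - p) choose s else if k = p then (n - p) choose (s - p) else 0)] (mod p)"
    proof (cases "k = 0 \<or> k = p \<or> k > p")
      case True then show ?thesis using p prime_gt_0_nat[OF p] by (auto simp: cong_def binomial_eq_0)
    next
      case False
      then have "p dvd (p choose k)" using dvd_choose_prime[of k p] p by (auto simp: prime_gt_0_nat)
      then show ?thesis using False by (auto simp: cong_def)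
    qed
  qed
  also have "(\<Sum>k\<le>s. (if k = 0 then (n - p) choose s else if k = p then (n - p) choose (s - p) else 0))
     = ((n - p) choose s) + (if p \<le> s then (n - p) choose (s - p) else 0)"
  proof -
    have "(\<Sum>k\<le>s. (if k = 0 then (n - p) choose s else if k = p then (n - p) choose (s - p) else 0))
       = (\<Sum>k\<le>s. (if k = 0 then (n - p) choose s else 0)) + (\<Sum>k\<le>s. (if k = p then (n - p) choose (s - p) else 0))"
      using prime_gt_0_nat[OF p] by (subst sum.distrib[symmetric]) (rule sum.cong, auto)
    also have "\<dots> = ((n - p) choose s) + (if p \<le> s then (n - p) choose (s - p) else 0)"
      using prime_gt_0_nat[OF p] by (cases "p \<le> s") (simp_all add: sum.delta)
    finally show ?thesis .
  qed
  finally show ?thesis .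
qed

lemma lucas_step:
  assumes p: "prime (p::nat)" and b: "b < p" and d: "d < p"
  shows "[(p*a+b) choose (p*c+d) = (a choose c) * (b choose d)] (mod p)"
  using assms(2,3)
proof (induction a arbitrary: c)
  case 0
  then show ?case
  proof (cases c)
    case 0 then show ?thesis by simp
  next
    case (Suc c')
    then have "b < p*c+d" using b by (metis add.commute less_le_trans mult_Suc_right not_add_less1 not_le trans_le_add1)
    then show ?thesis using Suc by (simp add: binomial_eq_0)
  qed
next
  case (Suc a)
  have pp: "p > 0" using prime_gt_0_nat[OF p] .
  have "[(p*Suc a+b) choose (p*c+d) = ((p*a+b) choose (p*c+d)) + (if p \<le> p*c+d then (p*a+b) choose (p*c+d - p) else 0)] (mod p)"
  proof -
    have e: "p*Suc a+b - p = p*a+b" by simp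
    show ?thesis using choose_step_mod[OF p, of "p*Suc a+b" "p*c+d"] unfolding e by simp
  qed
  also have "[((p*a+b) choose (p*c+d)) + (if p \<le> p*c+d then (p*a+b) choose (p*c+d - p) else 0)
      = (a choose c) * (b choose d) + (if 0 < c then (a choose (c - 1)) * (b choose d) else 0)] (mod p)"
  proof (cases c)
    case 0
    then have "\<not> p \<le> p*c+d" using d by simp
    then show ?thesis using Suc.IH[OF Suc.prems, of 0] 0 by (simp add: cong_add)
  next
    case (Suc c')
    have e: "p*c+d - p = p*c'+d" using Suc by (simp add: algebra_simps)
    have h1: "[(p*a+b) choose (p*c+d) = (a choose c)*(b choose d)] (mod p)" using Suc.IH[OF Suc.prems] .
    have h2: "[(p*a+b) choose (p*c'+d) = (a choose c')*(b choose d)] (mod p)" using Suc.IH[OF Suc.prems] .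
    have le: "p \<le> p*c+d" using Suc by simp
    show ?thesis unfolding e using cong_add[OF h1 h2] le Suc by simp
  qed
  also have "(a choose c) * (b choose d) + (if 0 < c then (a choose (c - 1)) * (b choose d) else 0)
      = (Suc a choose c) * (b choose d)"
    by (cases c) (auto simp: algebra_simps)
  finally show ?case .
qed

lemma not_dvd_choose_small:
  assumes p: "prime (p::nat)" and b: "b < p" and "d \<le> b"
  shows "\<not> p dvd (b choose d)"
proof
  assume "p dvd (b choose d)"
  then have "p dvd fact d * fact (b - d) * (b choose d)" by simp
  then have "p dvd fact b" using binomial_fact_lemma[OF assms(3)] by (metis of_nat_id)
  then show False using prime_dvd_fact_iff[OF p] b by simp
qed

lemma lucas_dvd_iff:
  assumes p: "prime (p::nat)"
  shows "p dvd (n choose s) \<longleftrightarrow> p dvd ((n div p) choose (s div p)) \<or> n mod p < s mod p"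
proof -
  have pp: "p > 0" using prime_gt_0_nat[OF p] .
  have "[(p*(n div p)+n mod p) choose (p*(s div p)+s mod p) = ((n div p) choose (s div p)) * ((n mod p) choose (s mod p))] (mod p)"
    by (rule lucas_step[OF p]) (use pp in auto)
  then have c: "[n choose s = ((n div p) choose (s div p)) * ((n mod p) choose (s mod p))] (mod p)" by simp
  have "p dvd (n choose s) \<longleftrightarrow> p dvd ((n div p) choose (s div p)) * ((n mod p) choose (s mod p))"
    using c by (simp add: cong_dvd_iff)
  also have "\<dots> \<longleftrightarrow> p dvd ((n div p) choose (s div p)) \<or> p dvd ((n mod p) choose (s mod p))"
    using p by (simp add: prime_dvd_mult_iff)
  also have "p dvd ((n mod p) choose (s mod p)) \<longleftrightarrow> n mod p < s mod p"
    using not_dvd_choose_small[OF p, of "n mod p" "s mod p"] pp by (cases "n mod p < s mod p") (auto simp: binomial_eq_0)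
  finally show ?thesis .
qed

definition Qc :: "nat \<Rightarrow> nat \<Rightarrow> nat" where
  "Qc p n = card {s. \<not> p dvd (n choose s)}"

lemma Qset_sub: "prime (p::nat) \<Longrightarrow> {s. \<not> p dvd (n choose s)} \<subseteq> {..n}"
proof (rule subsetI)
  fix s assume "s \<in> {s. \<not> p dvd (n choose s)}"
  then show "s \<in> {..n}" by (cases "s \<le> n") (auto simp: binomial_eq_0)
qed

lemma Qset_finite: "prime (p::nat) \<Longrightarrow> finite {s. \<not> p dvd (n choose s)}"
  using Qset_sub finite_subset by blast

lemma Qc_le: "prime (p::nat) \<Longrightarrow> Qc p n \<le> n + 1"
proof -
  assume p: "prime p"
  have "card {s. \<not> p dvd (n choose s)} \<le> card {..n}" by (rule card_mono) (simp_all add: Qset_sub[OF p])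
  then show ?thesis unfolding Qc_def by simp
qed

lemma Qc_rec:
  assumes p: "prime (p::nat)"
  shows "Qc p n = (n mod p + 1) * Qc p (n div p)"
proof -
  have pp: "p > 0" using prime_gt_0_nat[OF p] .
  let ?f = "\<lambda>(t,d). p*t+d"
  let ?B = "{t. \<not> p dvd ((n div p) choose t)} \<times> {..n mod p}"
  have eq: "{s. \<not> p dvd (n choose s)} = ?f ` ?B"
  proof
    show "{s. \<not> p dvd (n choose s)} \<subseteq> ?f ` ?B"
    proof
      fix s assume "s \<in> {s. \<not> p dvd (n choose s)}"
      then have "\<not> p dvd ((n div p) choose (s div p))" "s mod p \<le> n mod p"
        using lucas_dvd_iff[OF p, of n s] by auto
      moreover have "s = ?f (s div p, s mod p)" by simp
      ultimately show "s \<in> ?f ` ?B" by blast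
    qed
  next
    show "?f ` ?B \<subseteq> {s. \<not> p dvd (n choose s)}"
    proof
      fix s assume "s \<in> ?f ` ?B"
      then obtain t d where s: "s = p*t+d" and t: "\<not> p dvd ((n div p) choose t)" and d: "d \<le> n mod p"
        by auto
      have dp: "d < p" using d pp by (meson le_less_trans mod_less_divisor)
      have "s div p = t" "s mod p = d" using s dp pp by auto
      then show "s \<in> {s. \<not> p dvd (n choose s)}" using lucas_dvd_iff[OF p, of n s] t d by auto
    qed
  qed
  have inj: "inj_on ?f ?B"
  proof (rule inj_onI, clarify)
    fix t d t' d' assume "d \<le> n mod p" "d' \<le> n mod p" and e: "p*t+d = p*t'+d'"
    then have "d < p" "d' < p" using pp by (meson le_less_trans mod_less_divisor)+
    then have "(p*t+d) div p = t" "(p*t'+d') div p = t'" "(p*t+d) mod p = d" "(p*t'+d') mod p = d'"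
      using pp by auto
    then show "t = t' \<and> d = d'" using e by metis
  qed
  have "Qc p n = card ?B" unfolding Qc_def eq using card_image[OF inj] .
  also have "\<dots> = Qc p (n div p) * (n mod p + 1)" unfolding Qc_def
    by (simp add: card_cartesian_product)
  finally show ?thesis by simp
qed

lemma Qc_zero: "prime (p::nat) \<Longrightarrow> Qc p 0 = 1"
proof -
  assume p: "prime p"
  have z: "(0 choose s) = (if s = 0 then 1 else 0)" for s by (cases s) auto
  have "{s. \<not> p dvd (0 choose s)} = {0}" using p unfolding z by (auto simp: prime_gt_1_nat)
  then show ?thesis unfolding Qc_def by simp
qed

lemma Qc_prod:
  assumes p: "prime (p::nat)"
  shows "n < p ^ (k + 1) \<Longrightarrow> Qc p n = (\<Prod>j\<le>k. digit p n j + 1)"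
proof (induction k arbitrary: n)
  case 0
  then show ?case using Qc_rec[OF p, of n] Qc_zero[OF p] by (simp add: digit_def)
next
  case (Suc k)
  have pp: "p > 0" using prime_gt_0_nat[OF p] .
  have "n div p < p ^ (k+1)" using Suc.prems pp by (simp add: div_less_iff_less_mult mult.commute)
  then have ih: "Qc p (n div p) = (\<Prod>j\<le>k. digit p (n div p) j + 1)" using Suc.IH by simp
  have dg: "digit p (n div p) j = digit p n (Suc j)" for j
    unfolding digit_def by (simp add: div_mult2_eq)
  show ?case
    unfolding Qc_rec[OF p, of n] ih prod.atMost_Suc_shift dg by (simp add: digit_def)
qed

lemma all_less_Suc_split: "(\<forall>j<Suc k. P j) \<longleftrightarrow> P 0 \<and> (\<forall>j<k. P (Suc j))"
  using less_Suc_eq_0_disj by auto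

lemma Qc_full_iff:
  assumes p: "prime (p::nat)"
  shows "p ^ k \<le> n \<Longrightarrow> n < p ^ (k + 1) \<Longrightarrow> (Qc p n = n + 1 \<longleftrightarrow> (\<forall>j<k. digit p n j = p - 1))"
proof (induction k arbitrary: n)
  case 0
  then have "n < p" by simp
  then show ?case using Qc_rec[OF p, of n] Qc_zero[OF p] by simp
next
  case (Suc k)
  have pp: "p > 0" using prime_gt_0_nat[OF p] .
  define m where "m = n div p"
  define n0 where "n0 = n mod p"
  have n: "n = n0 + p * m" unfolding m_def n0_def by simp
  have n0: "n0 + 1 \<le> p" unfolding n0_def using pp by (simp add: Suc_le_eq)
  have m1: "m < p ^ (k+1)" unfolding m_def using Suc.prems pp by (simp add: div_less_iff_less_mult mult.commute)
  have m2: "p ^ k \<le> m" unfolding m_def using Suc.prems pp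
    by (simp add: less_eq_div_iff_mult_less_eq mult.commute)
  have "1 \<le> p ^ k" using pp by simp
  then have mpos: "m \<ge> 1" using m2 by linarith
  have ih: "Qc p m = m + 1 \<longleftrightarrow> (\<forall>j<k. digit p m j = p - 1)" using Suc.IH[OF m2 m1] .
  have dg: "digit p m j = digit p n (Suc j)" for j
    unfolding digit_def m_def by (simp add: div_mult2_eq)
  have d0: "digit p n 0 = n0" unfolding digit_def n0_def by simp
  have Q: "Qc p n = (n0 + 1) * Qc p m" using Qc_rec[OF p, of n] unfolding m_def n0_def .
  have Qm: "Qc p m \<le> m + 1" using Qc_le[OF p] .
  have "Qc p n = n + 1 \<longleftrightarrow> (n0 = p - 1 \<and> Qc p m = m + 1)"
  proof
    assume h: "Qc p n = n + 1"
    have a: "(n0+1) * Qc p m \<le> (n0+1)*(m+1)" using Qm by (rule mult_le_mono2)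
    have b1: "(n0+1)*m \<le> p*m" using n0 by (rule mult_le_mono1)
    have b: "(n0+1)*(m+1) \<le> n + 1" unfolding n using b1 by (simp add: algebra_simps)
    have c1: "(n0+1) * Qc p m = (n0+1)*(m+1)" using a b h Q by linarith
    have c2: "(n0+1)*(m+1) = n + 1" using a b h Q by linarith
    from c1 have "Qc p m = m + 1" using mult_left_cancel[of "n0+1" "Qc p m" "m+1"] by simp
    moreover from c2 have "n0 * m + m = p * m" unfolding n by (simp add: algebra_simps)
    then have "(n0 + 1) * m = p * m" by (simp add: algebra_simps)
    then have "n0 + 1 = p" using mpos mult_right_cancel[of m "n0+1" p] by simp
    ultimately show "n0 = p - 1 \<and> Qc p m = m + 1" by simp
  next
    assume h: "n0 = p - 1 \<and> Qc p m = m + 1"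
    then have e: "n0 + 1 = p" using pp by simp
    have "(n0 + 1) * Qc p m = p * (m + 1)" using h e by simp
    also have "\<dots> = n + 1" unfolding n using e by (simp add: algebra_simps)
    finally show "Qc p n = n + 1" unfolding Q .
  qed
  also have "\<dots> \<longleftrightarrow> (\<forall>j<Suc k. digit p n j = p - 1)"
    unfolding ih dg d0[symmetric] all_less_Suc_split by simp
  finally show ?case .
qed

definition SA :: "nat \<Rightarrow> int set" where "SA n = {- int n .. int n} - {0}"

definition R :: "nat \<Rightarrow> nat set \<Rightarrow> nat" where
  "R n S = card {w \<in> signed_perms n. descB n w = S}"

lemma sp_perm: "w \<in> signed_perms n \<Longrightarrow> w permutes SA n"
  by (simp add: signed_perms_def SA_def)
lemma sp_odd: "w \<in> signed_perms n \<Longrightarrow> w (- i) = - w i"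
  by (simp add: signed_perms_def)
lemma sp_out: "w \<in> signed_perms n \<Longrightarrow> x \<notin> SA n \<Longrightarrow> w x = x"
  using sp_perm permutes_not_in by fastforce
lemma sp_0: "w \<in> signed_perms n \<Longrightarrow> w 0 = 0"
  by (rule sp_out) (auto simp: SA_def)
lemma sp_in: "w \<in> signed_perms n \<Longrightarrow> w x \<in> SA n \<longleftrightarrow> x \<in> SA n"
  using sp_perm permutes_in_image by fastforce
lemma sp_inj: "w \<in> signed_perms n \<Longrightarrow> w x = w y \<longleftrightarrow> x = y"
  using sp_perm permutes_inj by (metis injD)
lemma sp_finite: "finite (signed_perms n)"
proof -
  have "signed_perms n \<subseteq> {w. w permutes SA n}" using sp_perm by blast
  moreover have "finite {w. w permutes SA n}" by (rule finite_permutations) (simp add: SA_def)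
  ultimately show ?thesis using finite_subset by blast
qed

lemma SA_iff: "x \<in> SA n \<longleftrightarrow> x \<noteq> 0 \<and> \<bar>x\<bar> \<le> int n"
  by (auto simp: SA_def)

lemma sp_abs_range: "w \<in> signed_perms n \<Longrightarrow> 1 \<le> i \<Longrightarrow> i \<le> int n \<Longrightarrow> 1 \<le> \<bar>w i\<bar> \<and> \<bar>w i\<bar> \<le> int n"
  using sp_in[of w n i] by (auto simp: SA_iff)

lemma sp_abs_inj: "w \<in> signed_perms n \<Longrightarrow> 1 \<le> i \<Longrightarrow> 1 \<le> j \<Longrightarrow> \<bar>w i\<bar> = \<bar>w j\<bar> \<Longrightarrow> i = j"
proof -
  assume w: "w \<in> signed_perms n" and i: "1 \<le> i" and j: "1 \<le> j" and e: "\<bar>w i\<bar> = \<bar>w j\<bar>"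
  then have "w i = w j \<or> w i = w (- j)" using sp_odd[OF w, of j] by (auto simp: abs_if split: if_splits)
  then have "i = j \<or> i = - j" using sp_inj[OF w] by blast
  then show "i = j" using i j by auto
qed

lemma descB_sub: "descB n w \<subseteq> {0..<n}" by (auto simp: descB_def)

definition negw :: "nat \<Rightarrow> (int \<Rightarrow> int) \<Rightarrow> int \<Rightarrow> int" where
  "negw n w = (\<lambda>x. if x \<in> SA n then - w x else x)"

lemma negw_sp: assumes w: "w \<in> signed_perms n" shows "negw n w \<in> signed_perms n"
proof -
  have bij: "bij_betw (negw n w) (SA n) (SA n)"
  proof (rule bij_betw_imageI)
    show "inj_on (negw n w) (SA n)"
    proof (rule inj_onI)
      fix x y assume "x \<in> SA n" "y \<in> SA n" "negw n w x = negw n w y"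
      then have "w x = w y" by (simp add: negw_def)
      then show "x = y" using sp_inj[OF w] by blast
    qed
    show "negw n w ` SA n = SA n"
    proof
      show "negw n w ` SA n \<subseteq> SA n"
      proof
        fix y assume "y \<in> negw n w ` SA n"
        then obtain x where x: "x \<in> SA n" "y = negw n w x" by (rule imageE)
        then have "w x \<in> SA n" using sp_in[OF w] by blast
        then have "- w x \<in> SA n" unfolding SA_iff by simp
        then show "y \<in> SA n" using x by (simp add: negw_def)
      qed
      show "SA n \<subseteq> negw n w ` SA n"
      proof
        fix y assume y: "y \<in> SA n"
        then have "- y \<in> SA n" by (simp add: SA_iff)
        moreover have "w ` SA n = SA n" by (rule permutes_image[OF sp_perm[OF w]])
        ultimately have "- y \<in> w ` SA n" by simp
        then obtain x where "x \<in> SA n" "- y = w x" by (rule imageE)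
        then have "x \<in> SA n" "w x = - y" by auto
        then have "y = negw n w x" by (simp add: negw_def)
        then show "y \<in> negw n w ` SA n" using \<open>x \<in> SA n\<close> by (rule image_eqI)
      qed
    qed
  qed
  have "negw n w permutes SA n" by (rule bij_imp_permutes[OF bij]) (simp add: negw_def)
  moreover have "\<forall>i. negw n w (- i) = - negw n w i"
    using sp_odd[OF w] by (auto simp: negw_def SA_iff)
  ultimately show ?thesis by (simp add: signed_perms_def SA_def)
qed

lemma negw_negw: assumes w: "w \<in> signed_perms n" shows "negw n (negw n w) = w"
proof (rule ext)
  fix x show "negw n (negw n w) x = w x"
  proof (cases "x \<in> SA n")
    case True then show ?thesis by (simp add: negw_def)
  next
    case False then show ?thesis using sp_out[OF w False] by (simp add: negw_def)
  qed
qed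

lemma negw_pos: "w \<in> signed_perms n \<Longrightarrow> i \<le> n \<Longrightarrow> negw n w (int i) = - w (int i)"
  using sp_0[of w n] by (auto simp: negw_def SA_iff)

lemma negw_desc: assumes w: "w \<in> signed_perms n" shows "descB n (negw n w) = {0..<n} - descB n w"
proof -
  have "i < n \<Longrightarrow> (negw n w (int i) > negw n w (int i + 1)) \<longleftrightarrow> \<not> (w (int i) > w (int i + 1))" for i
  proof -
    assume i: "i < n"
    have "w (int i) \<noteq> w (int i + 1)" using sp_inj[OF w] by simp
    moreover have "negw n w (int i + 1) = - w (int i + 1)" using negw_pos[OF w, of "i+1"] i by (simp add: add.commute)
    ultimately show ?thesis using negw_pos[OF w, of i] i by auto
  qed
  then show ?thesis by (auto simp: descB_def)
qed

lemma R_compl: assumes S: "S \<subseteq> {0..<n}" shows "R n ({0..<n} - S) = R n S"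
proof -
  let ?A = "{w \<in> signed_perms n. descB n w = S}"
  let ?B = "{w \<in> signed_perms n. descB n w = {0..<n} - S}"
  have inj: "inj_on (negw n) ?A" by (rule inj_on_inverseI[where g = "negw n"]) (simp add: negw_negw)
  have "negw n ` ?A = ?B"
  proof
    show "negw n ` ?A \<subseteq> ?B" using negw_sp negw_desc by auto
    show "?B \<subseteq> negw n ` ?A"
    proof
      fix w assume w: "w \<in> ?B"
      then have "negw n w \<in> ?A" using negw_sp negw_desc[of w n] S descB_sub[of n w] by auto
      moreover have "w = negw n (negw n w)" using w negw_negw by auto
      ultimately show "w \<in> negw n ` ?A" by blast
    qed
  qed
  then show ?thesis unfolding R_def using card_image[OF inj] by simp
qed

definition tau :: "int \<Rightarrow> int \<Rightarrow> int \<Rightarrow> int" where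
  "tau a b = transpose a b \<circ> transpose (- a) (- b)"

lemma tau_eq: assumes "1 \<le> a" "1 \<le> b"
  shows "tau a b x = (if x = a then b else if x = b then a else if x = - a then - b else if x = - b then - a else x)"
  using assms by (auto simp: tau_def transpose_def)

lemma tau_odd: "1 \<le> a \<Longrightarrow> 1 \<le> b \<Longrightarrow> tau a b (- x) = - tau a b x"
  by (simp add: tau_eq) 

lemma tau_invol: "1 \<le> a \<Longrightarrow> 1 \<le> b \<Longrightarrow> tau a b (tau a b x) = x"
  by (simp add: tau_eq)

lemma tau_comm: "tau a b = tau b a"
  by (simp add: tau_def transpose_commute)

lemma tau_abs: "1 \<le> a \<Longrightarrow> 1 \<le> b \<Longrightarrow> \<bar>tau a b x\<bar> = transpose a b \<bar>x\<bar>"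
  by (auto simp: tau_eq transpose_def abs_if)

lemma tau_perm: assumes "1 \<le> a" "a \<le> int n" "1 \<le> b" "b \<le> int n"
  shows "tau a b permutes SA n"
proof -
  have "transpose a b permutes SA n" "transpose (- a) (- b) permutes SA n"
    using assms by (auto intro!: permutes_swap_id simp: SA_iff)
  then show ?thesis unfolding tau_def using permutes_compose by blast
qed

lemma tau_mono: assumes "1 \<le> a" "1 \<le> b" "\<bar>a - b\<bar> = 1" "\<bar>x\<bar> \<noteq> b" "\<bar>y\<bar> \<noteq> b"
  shows "tau a b x < tau a b y \<longleftrightarrow> x < y"
  using assms unfolding tau_eq[OF assms(1,2)] by (auto simp: abs_if split: if_splits)

lemma tau_sp: assumes w: "w \<in> signed_perms n" and ab: "1 \<le> a" "a \<le> int n" "1 \<le> b" "b \<le> int n"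
  shows "tau a b \<circ> w \<in> signed_perms n"
proof -
  have "tau a b \<circ> w permutes SA n" using permutes_compose[OF sp_perm[OF w] tau_perm[OF ab]] .
  moreover have "\<forall>i. (tau a b \<circ> w) (- i) = - (tau a b \<circ> w) i" using sp_odd[OF w] tau_odd ab by simp
  ultimately show ?thesis by (simp add: signed_perms_def SA_def)
qed

lemma transpose_image_swap: "a \<in> A \<Longrightarrow> b \<notin> A \<Longrightarrow> transpose a b ` A = insert b (A - {a})"
  by (auto simp: transpose_def image_iff)

definition Xs :: "nat \<Rightarrow> nat \<Rightarrow> nat set \<Rightarrow> (int \<Rightarrow> int) set" where
  "Xs n s S' = {w \<in> signed_perms n. descB n w - {s} = S'}"

definition fib :: "nat \<Rightarrow> nat \<Rightarrow> nat set \<Rightarrow> int set \<Rightarrow> (int \<Rightarrow> int) set" where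
  "fib n s S' A = {w \<in> Xs n s S'. (\<lambda>i. \<bar>w i\<bar>) ` {1..int s} = A}"

lemma fib_finite: "finite (fib n s S' A)"
  using sp_finite[of n] by (rule finite_subset[rotated]) (auto simp: fib_def Xs_def)

lemma fib_move:
  assumes sn: "s \<le> n" and ab: "1 \<le> a" "a \<le> int n" "1 \<le> b" "b \<le> int n" "\<bar>a - b\<bar> = 1"
    and aA: "a \<in> A" and bA: "b \<notin> A" and w: "w \<in> fib n s S' A"
  shows "tau a b \<circ> w \<in> fib n s S' (insert b (A - {a}))"
proof -
  have wsp: "w \<in> signed_perms n" and wd: "descB n w - {s} = S'" and wA: "(\<lambda>i. \<bar>w i\<bar>) ` {1..int s} = A"
    using w by (auto simp: fib_def Xs_def)
  have sp: "tau a b \<circ> w \<in> signed_perms n" using tau_sp[OF wsp ab(1-4)] .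
  have low: "\<bar>w (int j)\<bar> \<noteq> b" if "j \<le> s" for j
  proof (cases "j = 0")
    case True then show ?thesis using sp_0[OF wsp] ab by simp
  next
    case False
    then have "\<bar>w (int j)\<bar> \<in> A" using wA that by force
    then show ?thesis using bA by auto
  qed
  have high: "\<bar>w (int j)\<bar> \<noteq> a" if "s < j" "j \<le> n" for j
  proof
    assume "\<bar>w (int j)\<bar> = a"
    then have "\<bar>w (int j)\<bar> \<in> A" using aA by simp
    then obtain i where i: "i \<in> {1..int s}" "\<bar>w (int j)\<bar> = \<bar>w i\<bar>" using wA by auto
    then have "int j = i" using sp_abs_inj[OF wsp, of "int j" i] that by auto
    then show False using i that by auto
  qed
  have ab': "1 \<le> b" "1 \<le> a" "\<bar>b - a\<bar> = 1" using ab by auto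
  have dd: "descB n (tau a b \<circ> w) - {s} = descB n w - {s}"
  proof -
    have "(tau a b (w (int i)) > tau a b (w (int i + 1))) \<longleftrightarrow> (w (int i) > w (int i + 1))"
      if "i < n" "i \<noteq> s" for i
    proof (cases "i < s")
      case True
      have "\<bar>w (int i)\<bar> \<noteq> b" "\<bar>w (int (i + 1))\<bar> \<noteq> b" using low[of i] low[of "i+1"] True by auto
      then show ?thesis using tau_mono[OF ab(1,3,5)] by (simp add: add.commute)
    next
      case False
      then have "s < i" using that by simp
      then have "\<bar>w (int i)\<bar> \<noteq> a" "\<bar>w (int (i + 1))\<bar> \<noteq> a" using high[of i] high[of "i+1"] that by auto
      then show ?thesis using tau_mono[OF ab'] tau_comm[of a b] by (simp add: add.commute)
    qed
    then show ?thesis by (auto simp: descB_def)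
  qed
  have img: "(\<lambda>i. \<bar>(tau a b \<circ> w) i\<bar>) ` {1..int s} = insert b (A - {a})"
  proof -
    have "(\<lambda>i. \<bar>(tau a b \<circ> w) i\<bar>) ` {1..int s} = transpose a b ` ((\<lambda>i. \<bar>w i\<bar>) ` {1..int s})"
      using tau_abs[OF ab(1,3)] by (auto simp: image_comp o_def)
    then show ?thesis using wA transpose_image_swap[OF aA bA] by simp
  qed
  show ?thesis using sp dd wd img by (simp add: fib_def Xs_def)
qed

lemma fib_move_card:
  assumes sn: "s \<le> n" and ab: "1 \<le> a" "a \<le> int n" "1 \<le> b" "b \<le> int n" "\<bar>a - b\<bar> = 1"
    and aA: "a \<in> A" and bA: "b \<notin> A"
  shows "card (fib n s S' A) = card (fib n s S' (insert b (A - {a})))"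
proof (rule antisym)
  let ?AA = "insert b (A - {a})"
  have inj: "inj_on ((\<circ>) (tau a b)) B" for B
    by (rule inj_on_inverseI[where g = "(\<circ>) (tau a b)"]) (use ab tau_invol in \<open>auto simp: fun_eq_iff\<close>)
  show "card (fib n s S' A) \<le> card (fib n s S' ?AA)"
    by (rule card_inj_on_le[OF inj _ fib_finite]) (use fib_move[OF sn ab aA bA] in blast)
  have hback: "insert a (?AA - {b}) = A" using aA bA by auto
  have ab2: "1 \<le> b" "b \<le> int n" "1 \<le> a" "a \<le> int n" "\<bar>b - a\<bar> = 1" using ab by auto
  have "tau b a \<circ> w \<in> fib n s S' A" if "w \<in> fib n s S' ?AA" for w
    using fib_move[OF sn ab2, of ?AA w S'] that hback aA bA by auto
  then show "card (fib n s S' ?AA) \<le> card (fib n s S' A)"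
    by (intro card_inj_on_le[OF inj _ fib_finite]) (auto simp: tau_comm[of b a])
qed

lemma down_closed:
  assumes fin: "finite A" and pos: "\<forall>a\<in>A. 1 \<le> a" and cl: "\<forall>a\<in>A. 2 \<le> a \<longrightarrow> a - 1 \<in> A"
  shows "A = {1..int (card A)}"
proof (cases "A = {}")
  case True then show ?thesis by simp
next
  case False
  have dn: "a - int k \<in> A" if "a \<in> A" "1 \<le> a - int k" for a k
    using that(2)
  proof (induction k)
    case 0 then show ?case using that(1) by simp
  next
    case (Suc k)
    then have "a - int k \<in> A" by simp
    moreover have "2 \<le> a - int k" using Suc.prems by simp
    ultimately have "a - int k - 1 \<in> A" using cl by blast
    then show ?case by (simp add: algebra_simps)
  qed
  define m where "m = Max A"
  have mA: "m \<in> A" unfolding m_def using fin False by simp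
  have sub1: "A \<subseteq> {1..m}" using pos fin m_def by auto
  have sub2: "{1..m} \<subseteq> A"
  proof
    fix j assume j: "j \<in> {1..m}"
    then have "m - int (nat (m - j)) \<in> A" using dn[OF mA, of "nat (m - j)"] by auto
    then show "j \<in> A" using j by simp
  qed
  have eq: "A = {1..m}" using sub1 sub2 by blast
  then have "card A = nat m" by simp
  moreover have "m \<ge> 1" using mA pos by auto
  ultimately show ?thesis using eq by simp
qed

lemma fib_card_const:
  assumes sn: "s \<le> n"
  shows "A \<subseteq> {1..int n} \<Longrightarrow> card A = s \<Longrightarrow> card (fib n s S' A) = card (fib n s S' {1..int s})"
proof (induction "nat (sum id A)" arbitrary: A rule: less_induct)
  case less
  have fin: "finite A" using less.prems(1) finite_subset by blast
  show ?case
  proof (cases "\<exists>a\<in>A. 2 \<le> a \<and> a - 1 \<notin> A")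
    case True
    then obtain a where a: "a \<in> A" "2 \<le> a" "a - 1 \<notin> A" by blast
    define A' where "A' = insert (a - 1) (A - {a})"
    have an: "a \<le> int n" using a less.prems(1) by auto
    have c1: "card (fib n s S' A) = card (fib n s S' A')"
      unfolding A'_def by (rule fib_move_card[OF sn]) (use a an in auto)
    have sub': "A' \<subseteq> {1..int n}" using less.prems(1) a unfolding A'_def by auto
    have card': "card A' = s" unfolding A'_def using fin a less.prems(2) card_gt_0_iff[of A] by (auto simp: card_insert_if)
    have s1: "sum id A' = sum id A - 1" unfolding A'_def using fin a by (simp add: sum_diff1)
    have "sum id (A - {a}) \<ge> 0" using less.prems(1) by (intro sum_nonneg) auto
    then have "sum id A \<ge> a" using fin a sum.remove[OF fin a(1), of id] by simp
    then have lt: "nat (sum id A') < nat (sum id A)" using s1 a by simp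
    show ?thesis using c1 less.hyps[OF lt sub' card'] by simp
  next
    case False
    have "A = {1..int (card A)}"
      by (rule down_closed[OF fin]) (use less.prems(1) False in auto)
    then show ?thesis using less.prems(2) by simp
  qed
qed

lemma Xs_card:
  assumes sn: "s \<le> n"
  shows "card (Xs n s S') = (n choose s) * card (fib n s S' {1..int s})"
proof -
  define Subs where "Subs = {A. A \<subseteq> {1..int n} \<and> card A = s}"
  have eqU: "Xs n s S' = (\<Union>A\<in>Subs. fib n s S' A)"
  proof
    show "Xs n s S' \<subseteq> (\<Union>A\<in>Subs. fib n s S' A)"
    proof
      fix w assume w: "w \<in> Xs n s S'"
      then have wsp: "w \<in> signed_perms n" by (simp add: Xs_def)
      let ?A = "(\<lambda>i. \<bar>w i\<bar>) ` {1..int s}"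
      have "?A \<subseteq> {1..int n}" using sp_abs_range[OF wsp] sn by force
      moreover have "inj_on (\<lambda>i. \<bar>w i\<bar>) {1..int s}"
        by (rule inj_onI) (use sp_abs_inj[OF wsp] in auto)
      then have "card ?A = s" by (simp add: card_image)
      ultimately have "?A \<in> Subs" by (simp add: Subs_def)
      moreover have "w \<in> fib n s S' ?A" using w by (simp add: fib_def)
      ultimately show "w \<in> (\<Union>A\<in>Subs. fib n s S' A)" by blast
    qed
    show "(\<Union>A\<in>Subs. fib n s S' A) \<subseteq> Xs n s S'" by (auto simp: fib_def)
  qed
  have finS: "finite Subs" unfolding Subs_def
    by (rule finite_subset[of _ "Pow {1..int n}"]) auto
  have "card (Xs n s S') = (\<Sum>A\<in>Subs. card (fib n s S' A))"
    unfolding eqU by (rule card_UN_disjoint[OF finS]) (use fib_finite in \<open>auto simp: fib_def\<close>)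
  also have "\<dots> = (\<Sum>A\<in>Subs. card (fib n s S' {1..int s}))"
    by (rule sum.cong) (use fib_card_const[OF sn] in \<open>auto simp: Subs_def\<close>)
  also have "\<dots> = card Subs * card (fib n s S' {1..int s})" by simp
  also have "card Subs = n choose s" unfolding Subs_def using n_subsets[of "{1..int n}" s] by simp
  finally show ?thesis .
qed

lemma R_toggle_sum:
  assumes "s \<notin> S'"
  shows "R n S' + R n (insert s S') = card (Xs n s S')"
proof -
  have eq: "Xs n s S' = {w \<in> signed_perms n. descB n w = S'} \<union> {w \<in> signed_perms n. descB n w = insert s S'}"
    using assms by (auto simp: Xs_def)
  have fin: "finite {w \<in> signed_perms n. descB n w = T}" for T using sp_finite by simp
  show ?thesis unfolding eq R_def
    by (rule card_Un_disjoint[symmetric]) (use fin assms in auto)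
qed

lemma R_toggle_dvd:
  assumes "s < n" "s \<notin> S'"
  shows "(n choose s) dvd (R n S' + R n (insert s S'))"
  unfolding R_toggle_sum[OF assms(2)] using Xs_card[of s n S'] assms by simp

lemma dc_single: "desc_comp [a] = {}"
  by (simp add: desc_comp_def)

lemma dc_cons: assumes "\<beta> \<noteq> []" shows "desc_comp (a # \<beta>) = insert a ((+) a ` desc_comp \<beta>)"
proof
  show "desc_comp (a # \<beta>) \<subseteq> insert a ((+) a ` desc_comp \<beta>)"
  proof
    fix x assume "x \<in> desc_comp (a # \<beta>)"
    then obtain j where j: "1 \<le> j" "j < Suc (length \<beta>)" "x = sum_list (take j (a # \<beta>))"
      by (auto simp: desc_comp_def)
    show "x \<in> insert a ((+) a ` desc_comp \<beta>)"
    proof (cases "j = 1")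
      case True then show ?thesis using j by simp
    next
      case False
      then obtain j' where j': "j = Suc j'" "1 \<le> j'" using j by (cases j) auto
      then have "x = a + sum_list (take j' \<beta>)" using j by simp
      moreover have "sum_list (take j' \<beta>) \<in> desc_comp \<beta>" using j j' by (auto simp: desc_comp_def)
      ultimately show ?thesis by blast
    qed
  qed
  show "insert a ((+) a ` desc_comp \<beta>) \<subseteq> desc_comp (a # \<beta>)"
  proof
    fix x assume "x \<in> insert a ((+) a ` desc_comp \<beta>)"
    then consider "x = a" | j' where "1 \<le> j'" "j' < length \<beta>" "x = a + sum_list (take j' \<beta>)"
      by (auto simp: desc_comp_def)
    then show "x \<in> desc_comp (a # \<beta>)"
    proof cases
      case 1
      have "a = sum_list (take 1 (a # \<beta>))" by simp
      moreover have "1 < length (a # \<beta>)" using assms by simp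
      ultimately show ?thesis using 1 unfolding desc_comp_def by blast
    next
      case 2
      have "x = sum_list (take (Suc j') (a # \<beta>))" using 2 by simp
      moreover have "Suc j' < length (a # \<beta>)" using 2 by simp
      ultimately show ?thesis unfolding desc_comp_def by fastforce
    qed
  qed
qed

lemma dc_ge_hd: assumes "x \<in> desc_comp (b # \<gamma>)" shows "b \<le> x"
proof -
  obtain j where j: "1 \<le> j" "x = sum_list (take j (b # \<gamma>))" using assms by (auto simp: desc_comp_def)
  then obtain j' where "j = Suc j'" by (cases j) auto
  then show ?thesis using j by simp
qed

lemma pc_tail:
  assumes "a # \<beta> \<in> pseudo_comps n" "\<beta> \<noteq> []"
  shows "\<beta> \<in> pseudo_comps (n - a)" "hd \<beta> > 0" "a < n"
proof -
  have pos: "\<forall>j. 0 < j \<and> j < Suc (length \<beta>) \<longrightarrow> 0 < (a # \<beta>) ! j" and s: "a + sum_list \<beta> = n"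
    using assms(1) by (auto simp: pseudo_comps_def)
  have p2: "0 < \<beta> ! j" if "j < length \<beta>" for j using pos[rule_format, of "Suc j"] that by simp
  show "\<beta> \<in> pseudo_comps (n - a)" using assms(2) p2 s by (auto simp: pseudo_comps_def)
  show h: "hd \<beta> > 0" using p2[of 0] assms(2) by (simp add: hd_conv_nth)
  have "sum_list \<beta> > 0" using assms(2) h by (cases \<beta>) auto
  then show "a < n" using s by simp
qed

lemma dc_inj: "\<alpha> \<in> pseudo_comps n \<Longrightarrow> \<alpha>' \<in> pseudo_comps n \<Longrightarrow> desc_comp \<alpha> = desc_comp \<alpha>' \<Longrightarrow> \<alpha> = \<alpha>'"
proof (induction \<alpha> arbitrary: \<alpha>' n)
  case Nil then show ?case by (simp add: pseudo_comps_def)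
next
  case (Cons a \<beta>)
  obtain a' \<beta>' where a': "\<alpha>' = a' # \<beta>'" using Cons.prems(2) by (cases \<alpha>') (auto simp: pseudo_comps_def)
  show ?case
  proof (cases "\<beta> = []")
    case True
    then have "desc_comp \<alpha>' = {}" using Cons.prems(3) by (simp add: dc_single)
    then have "\<beta>' = []" using a' dc_cons[of \<beta>' a'] by auto
    then show ?thesis using True a' Cons.prems by (simp add: pseudo_comps_def)
  next
    case False
    then have "desc_comp (a # \<beta>) \<noteq> {}" using dc_cons by auto
    then have F': "\<beta>' \<noteq> []" using a' Cons.prems(3) dc_single by auto
    have D: "desc_comp (a # \<beta>) = insert a ((+) a ` desc_comp \<beta>)" using dc_cons[OF False] .
    have D': "desc_comp (a' # \<beta>') = insert a' ((+) a' ` desc_comp \<beta>')" using dc_cons[OF F'] .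
    have t: "\<beta> \<in> pseudo_comps (n - a)" "hd \<beta> > 0" using pc_tail[OF Cons.prems(1)[unfolded] False] by auto
    have t': "\<beta>' \<in> pseudo_comps (n - a')" "hd \<beta>' > 0" using pc_tail[of a' \<beta>' n] Cons.prems(2) a' F' by auto
    have g: "0 < x" if "x \<in> desc_comp \<gamma>" "\<gamma> \<noteq> []" "hd \<gamma> > 0" for x \<gamma>
      using that dc_ge_hd[of x "hd \<gamma>" "tl \<gamma>"] by (cases \<gamma>) auto
    have m1: "\<forall>x\<in>desc_comp (a # \<beta>). a \<le> x" using D by auto
    have m2: "\<forall>x\<in>desc_comp (a' # \<beta>'). a' \<le> x" using D' by auto
    have i1: "a \<in> desc_comp (a' # \<beta>')" using D Cons.prems(3) a' by simp
    have i2: "a' \<in> desc_comp (a # \<beta>)" using D' Cons.prems(3) a' by simp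
    have aa: "a = a'" using m1 m2 i1 i2 by force
    have "(+) a ` desc_comp \<beta> = (+) a ` desc_comp \<beta>'"
    proof -
      have n1: "a \<notin> (+) a ` desc_comp \<beta>"
      proof
        assume "a \<in> (+) a ` desc_comp \<beta>"
        then have "0 \<in> desc_comp \<beta>" by auto
        then show False using g[OF _ False t(2), of 0] by simp
      qed
      have n2: "a \<notin> (+) a ` desc_comp \<beta>'"
      proof
        assume "a \<in> (+) a ` desc_comp \<beta>'"
        then have "0 \<in> desc_comp \<beta>'" by auto
        then show False using g[OF _ F' t'(2), of 0] by simp
      qed
      have "insert a ((+) a ` desc_comp \<beta>) = insert a ((+) a ` desc_comp \<beta>')"
        using D D' Cons.prems(3) a' aa by simp
      then have "insert a ((+) a ` desc_comp \<beta>) - {a} = insert a ((+) a ` desc_comp \<beta>') - {a}" by simp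
      then show ?thesis using n1 n2 by simp
    qed
    then have "desc_comp \<beta> = desc_comp \<beta>'" by (simp add: inj_image_eq_iff)
    then have "\<beta> = \<beta>'" using Cons.IH[OF t(1)] t'(1) aa by simp
    then show ?thesis using a' aa by simp
  qed
qed

lemma dc_sub: assumes "\<alpha> \<in> pseudo_comps n" shows "desc_comp \<alpha> \<subseteq> {0..<n}"
proof
  fix x assume "x \<in> desc_comp \<alpha>"
  then obtain j where j: "1 \<le> j" "j < length \<alpha>" "x = sum_list (take j \<alpha>)" by (auto simp: desc_comp_def)
  have "sum_list \<alpha> = sum_list (take j \<alpha>) + sum_list (drop j \<alpha>)"
    by (metis append_take_drop_id sum_list_append)
  moreover have "0 < sum_list (drop j \<alpha>)"
  proof -
    have "drop j \<alpha> = \<alpha> ! j # drop (Suc j) \<alpha>" using j by (simp add: Cons_nth_drop_Suc)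
    moreover have "0 < \<alpha> ! j" using assms j by (auto simp: pseudo_comps_def)
    ultimately show ?thesis by simp
  qed
  ultimately show "x \<in> {0..<n}" using assms j by (auto simp: pseudo_comps_def)
qed

lemma dc_surj: "S \<subseteq> {0..<n} \<Longrightarrow> \<exists>\<alpha>\<in>pseudo_comps n. desc_comp \<alpha> = S"
proof (induction "card S" arbitrary: S n rule: less_induct)
  case less
  have finS: "finite S" using less.prems finite_subset by blast
  show ?case
  proof (cases "S = {}")
    case True
    then show ?thesis by (intro bexI[of _ "[n]"]) (auto simp: dc_single pseudo_comps_def)
  next
    case False
    define a where "a = Min S"
    have aS: "a \<in> S" using finS False a_def by simp
    have amin: "\<forall>x\<in>S. a \<le> x" using finS a_def by simp
    have an: "a < n" using aS less.prems by auto
    define S' where "S' = (\<lambda>x. x - a) ` (S - {a})"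
    have S'sub: "S' \<subseteq> {0..<n - a}" using less.prems amin unfolding S'_def by force
    have S'pos: "0 \<notin> S'" using amin unfolding S'_def by force
    have "card S' \<le> card (S - {a})" unfolding S'_def by (rule card_image_le) (use finS in simp)
    also have "\<dots> < card S"
    proof -
      have "card S > 0" using finS aS card_gt_0_iff by blast
      then show ?thesis using finS aS by simp
    qed
    finally obtain \<beta> where b: "\<beta> \<in> pseudo_comps (n - a)" "desc_comp \<beta> = S'"
      using less.hyps S'sub by blast
    obtain b \<gamma> where bg: "\<beta> = b # \<gamma>" using b(1) by (cases \<beta>) (auto simp: pseudo_comps_def)
    have bpos: "0 < b"
    proof (rule ccontr)
      assume "\<not> 0 < b"
      then have b0: "b = 0" by simp
      show False
      proof (cases "\<gamma> = []")
        case True then show False using b(1) bg b0 an by (simp add: pseudo_comps_def)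
      next
        case False
        then have "b \<in> desc_comp \<beta>" using bg dc_cons by auto
        then show False using b(2) b0 S'pos by simp
      qed
    qed
    have ab: "a # \<beta> \<in> pseudo_comps n"
    proof -
      have "0 < (a # \<beta>) ! j" if "0 < j" "j < length (a # \<beta>)" for j
      proof (cases j)
        case 0 then show ?thesis using that by simp
      next
        case (Suc j')
        show ?thesis
        proof (cases j')
          case 0 then show ?thesis using Suc bg bpos by simp
        next
          case (Suc j'')
          then show ?thesis using b(1) \<open>j = Suc j'\<close> that by (auto simp: pseudo_comps_def)
        qed
      qed
      moreover have "sum_list (a # \<beta>) = n" using b(1) an by (simp add: pseudo_comps_def)
      ultimately show ?thesis by (simp add: pseudo_comps_def)
    qed
    have "desc_comp (a # \<beta>) = insert a ((+) a ` S')" using dc_cons[of \<beta> a] bg b(2) by simp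
    also have "(+) a ` S' = S - {a}"
    proof -
      have "(+) a ` S' = (\<lambda>x. a + (x - a)) ` (S - {a})" by (simp add: S'_def image_image)
      also have "\<dots> = (\<lambda>x. x) ` (S - {a})" by (rule image_cong) (use amin in auto)
      finally show ?thesis by simp
    qed
    also have "insert a (S - {a}) = S" using aS by auto
    finally show ?thesis using ab by blast
  qed
qed

lemma cB_eq_R:
  "cB p i n = card {S. S \<subseteq> {0..<n} \<and> [int (R n S) = i] (mod int p)}"
proof -
  have inj: "inj_on desc_comp (pseudo_comps n)" by (rule inj_onI) (use dc_inj in blast)
  have img: "desc_comp ` {\<alpha> \<in> pseudo_comps n. [int (R n (desc_comp \<alpha>)) = i] (mod int p)}
     = {S. S \<subseteq> {0..<n} \<and> [int (R n S) = i] (mod int p)}"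
  proof
    show "desc_comp ` {\<alpha> \<in> pseudo_comps n. [int (R n (desc_comp \<alpha>)) = i] (mod int p)}
     \<subseteq> {S. S \<subseteq> {0..<n} \<and> [int (R n S) = i] (mod int p)}" using dc_sub by auto
    show "{S. S \<subseteq> {0..<n} \<and> [int (R n S) = i] (mod int p)} \<subseteq>
      desc_comp ` {\<alpha> \<in> pseudo_comps n. [int (R n (desc_comp \<alpha>)) = i] (mod int p)}"
    proof
      fix S assume S: "S \<in> {S. S \<subseteq> {0..<n} \<and> [int (R n S) = i] (mod int p)}"
      then obtain \<alpha> where a: "\<alpha> \<in> pseudo_comps n" "desc_comp \<alpha> = S" using dc_surj by blast
      show "S \<in> desc_comp ` {\<alpha> \<in> pseudo_comps n. [int (R n (desc_comp \<alpha>)) = i] (mod int p)}"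
        by (rule image_eqI[of _ _ \<alpha>]) (use a S in auto)
    qed
  qed
  have "cB p i n = card {\<alpha> \<in> pseudo_comps n. [int (R n (desc_comp \<alpha>)) = i] (mod int p)}"
    by (simp add: cB_def ribbonB_def R_def)
  also have "\<dots> = card (desc_comp ` {\<alpha> \<in> pseudo_comps n. [int (R n (desc_comp \<alpha>)) = i] (mod int p)})"
    by (rule card_image[symmetric]) (rule inj_on_subset[OF inj], auto)
  finally show ?thesis using img by simp
qed

definition Fs :: "nat \<Rightarrow> nat \<Rightarrow> nat set" where
  "Fs p n = {s. 1 \<le> s \<and> s < n \<and> p dvd (n choose s)}"
definition Us :: "nat \<Rightarrow> nat \<Rightarrow> nat set" where
  "Us p n = {0..<n} - Fs p n"

lemma Fs_sub: "Fs p n \<subseteq> {1..<n}" by (auto simp: Fs_def)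
lemma Fs_fin: "finite (Fs p n)" using Fs_sub finite_subset by blast
lemma Us_fin: "finite (Us p n)" by (simp add: Us_def)
lemma zero_Us: "0 < n \<Longrightarrow> 0 \<in> Us p n" by (auto simp: Us_def Fs_def)

lemma toggle_sign:
  assumes p: "prime p" and V: "V \<subseteq> Us p n"
  shows "T \<subseteq> Fs p n \<Longrightarrow> [int (R n (V \<union> T)) = (-1) ^ card T * int (R n V)] (mod int p)"
proof (induction T rule: infinite_finite_induct)
  case (infinite T) then show ?case using Fs_fin finite_subset by blast
next
  case empty then show ?case by simp
next
  case (insert t T)
  have ih: "[int (R n (V \<union> T)) = (-1) ^ card T * int (R n V)] (mod int p)" using insert by simp
  have tF: "t \<in> Fs p n" using insert by simp
  have tn: "t \<notin> V \<union> T" using insert V tF by (auto simp: Us_def)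
  have "(n choose t) dvd (R n (V \<union> T) + R n (insert t (V \<union> T)))"
    by (rule R_toggle_dvd) (use tF tn in \<open>auto simp: Fs_def\<close>)
  moreover have "p dvd (n choose t)" using tF by (simp add: Fs_def)
  ultimately have "p dvd (R n (V \<union> T) + R n (insert t (V \<union> T)))" by (rule dvd_trans[rotated])
  then have d1: "int p dvd (int (R n (V \<union> T)) + int (R n (insert t (V \<union> T))))"
    by (metis int_dvd_int_iff of_nat_add)
  have d2: "int p dvd (int (R n (V \<union> T)) - (-1) ^ card T * int (R n V))"
    using ih by (simp add: cong_iff_dvd_diff)
  have "int p dvd ((int (R n (V \<union> T)) + int (R n (insert t (V \<union> T)))) - (int (R n (V \<union> T)) - (-1) ^ card T * int (R n V)))"
    using d1 d2 by (rule dvd_diff)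
  moreover have "card (insert t T) = Suc (card T)" using insert by simp
  moreover have "V \<union> insert t T = insert t (V \<union> T)" by auto
  ultimately show ?case by (simp add: cong_iff_dvd_diff algebra_simps)
qed

lemma count_decomp:
  assumes p: "prime p"
  shows "card {S. S \<subseteq> {0..<n} \<and> [int (R n S) = i] (mod int p)}
       = (\<Sum>V\<in>Pow (Us p n). card {T \<in> Pow (Fs p n). [(-1) ^ card T * int (R n V) = i] (mod int p)})"
proof -
  let ?U = "Us p n" and ?F = "Fs p n"
  let ?P = "\<lambda>S. [int (R n S) = i] (mod int p)"
  let ?G = "\<lambda>V. {T \<in> Pow ?F. ?P (V \<union> T)}"
  have UF: "?U \<inter> ?F = {}" "?U \<union> ?F = {0..<n}" using Fs_sub[of p n] by (auto simp: Us_def)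
  have eq: "{S. S \<subseteq> {0..<n} \<and> ?P S} = (\<Union>V\<in>Pow ?U. (\<lambda>T. V \<union> T) ` ?G V)"
  proof
    show "{S. S \<subseteq> {0..<n} \<and> ?P S} \<subseteq> (\<Union>V\<in>Pow ?U. (\<lambda>T. V \<union> T) ` ?G V)"
    proof
      fix S assume S: "S \<in> {S. S \<subseteq> {0..<n} \<and> ?P S}"
      have "S = (S \<inter> ?U) \<union> (S \<inter> ?F)" using S UF by auto
      then show "S \<in> (\<Union>V\<in>Pow ?U. (\<lambda>T. V \<union> T) ` ?G V)" using S
        by (intro UN_I[of "S \<inter> ?U"]) (auto intro!: image_eqI[of _ _ "S \<inter> ?F"])
    qed
    show "(\<Union>V\<in>Pow ?U. (\<lambda>T. V \<union> T) ` ?G V) \<subseteq> {S. S \<subseteq> {0..<n} \<and> ?P S}"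
      using UF by auto
  qed
  have inj: "inj_on (\<lambda>T. V \<union> T) (?G V)" if "V \<in> Pow ?U" for V
  proof (rule inj_onI)
    fix T1 T2 assume "T1 \<in> ?G V" "T2 \<in> ?G V" "V \<union> T1 = V \<union> T2"
    then have "(V \<union> T1) \<inter> ?F = (V \<union> T2) \<inter> ?F" by simp
    moreover have "V \<inter> ?F = {}" using that UF by auto
    ultimately show "T1 = T2" using \<open>T1 \<in> ?G V\<close> \<open>T2 \<in> ?G V\<close> by auto
  qed
  have "card {S. S \<subseteq> {0..<n} \<and> ?P S} = (\<Sum>V\<in>Pow ?U. card ((\<lambda>T. V \<union> T) ` ?G V))"
    unfolding eq
  proof (rule card_UN_disjoint)
    show "finite (Pow ?U)" using Us_fin by simp
    show "\<forall>V\<in>Pow ?U. finite ((\<lambda>T. V \<union> T) ` ?G V)" using Fs_fin by auto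
    show "\<forall>V1\<in>Pow ?U. \<forall>V2\<in>Pow ?U. V1 \<noteq> V2 \<longrightarrow> ((\<lambda>T. V1 \<union> T) ` ?G V1) \<inter> ((\<lambda>T. V2 \<union> T) ` ?G V2) = {}"
    proof (intro ballI impI)
      fix V1 V2 assume V: "V1 \<in> Pow ?U" "V2 \<in> Pow ?U" "V1 \<noteq> V2"
      show "((\<lambda>T. V1 \<union> T) ` ?G V1) \<inter> ((\<lambda>T. V2 \<union> T) ` ?G V2) = {}"
      proof (rule ccontr)
        assume "\<not> ?thesis"
        then obtain T1 T2 where T: "T1 \<in> ?G V1" "T2 \<in> ?G V2" "V1 \<union> T1 = V2 \<union> T2" by blast
        then have "(V1 \<union> T1) \<inter> ?U = (V2 \<union> T2) \<inter> ?U" by simp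
        moreover have "T1 \<inter> ?U = {}" "T2 \<inter> ?U = {}" using T UF by auto
        ultimately have "V1 = V2" using V by auto
        then show False using V by simp
      qed
    qed
  qed
  also have "\<dots> = (\<Sum>V\<in>Pow ?U. card (?G V))"
    by (rule sum.cong[OF refl]) (rule card_image[OF inj])
  also have "\<dots> = (\<Sum>V\<in>Pow ?U. card {T \<in> Pow ?F. [(-1) ^ card T * int (R n V) = i] (mod int p)})"
  proof (rule sum.cong[OF refl])
    fix V assume V: "V \<in> Pow ?U"
    have "?P (V \<union> T) \<longleftrightarrow> [(-1) ^ card T * int (R n V) = i] (mod int p)" if "T \<in> Pow ?F" for T
      using toggle_sign[OF p, of V n T] V that
      by (meson PowD cong_sym cong_trans)
    then show "card (?G V) = card {T \<in> Pow ?F. [(-1) ^ card T * int (R n V) = i] (mod int p)}"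
      by (metis (no_types, lifting) mem_Collect_eq Collect_cong)
  qed
  finally show ?thesis .
qed

definition Ev :: "nat set \<Rightarrow> nat" where "Ev F = card {T \<in> Pow F. even (card T)}"
definition Od :: "nat set \<Rightarrow> nat" where "Od F = card {T \<in> Pow F. odd (card T)}"

lemma EO_sum: assumes "finite F" shows "Ev F + Od F = 2 ^ card F"
proof -
  have u: "{T \<in> Pow F. even (card T)} \<union> {T \<in> Pow F. odd (card T)} = Pow F" by auto
  have "card ({T \<in> Pow F. even (card T)} \<union> {T \<in> Pow F. odd (card T)}) = Ev F + Od F"
    unfolding Ev_def Od_def by (rule card_Un_disjoint) (use assms in auto)
  then have "card (Pow F) = Ev F + Od F" unfolding u .
  then show ?thesis using card_Pow[OF assms] by simp
qed

lemma EO_eq: assumes fin: "finite F" and ne: "F \<noteq> {}" shows "Ev F = Od F"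
proof -
  obtain f where f: "f \<in> F" using ne by blast
  define \<phi> where "\<phi> T = (if f \<in> T then T - {f} else insert f T)" for T
  have invol: "\<phi> (\<phi> T) = T" for T unfolding \<phi>_def by auto
  have inj: "inj_on \<phi> B" for B by (rule inj_on_inverseI[where g = \<phi>]) (rule invol)
  have par: "odd (card (\<phi> T)) \<longleftrightarrow> even (card T)" if "T \<in> Pow F" for T
  proof -
    have fT: "finite T" using that fin finite_subset by auto
    show ?thesis
    proof (cases "f \<in> T")
      case True
      then have "card T > 0" using fT card_gt_0_iff by blast
      then show ?thesis using True fT by (auto simp: \<phi>_def)
    next
      case False then show ?thesis using fT by (simp add: \<phi>_def)
    qed
  qed
  have PF: "\<phi> T \<in> Pow F" if "T \<in> Pow F" for T using that f by (auto simp: \<phi>_def)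
  have finP: "finite {T \<in> Pow F. P T}" for P using fin by simp
  have "Ev F \<le> Od F" unfolding Ev_def Od_def
    by (rule card_inj_on_le[OF inj _ finP]) (use PF par in auto)
  moreover have "Od F \<le> Ev F" unfolding Ev_def Od_def
  proof (rule card_inj_on_le[OF inj _ finP])
    show "\<phi> ` {T \<in> Pow F. odd (card T)} \<subseteq> {T \<in> Pow F. even (card T)}"
    proof
      fix X assume "X \<in> \<phi> ` {T \<in> Pow F. odd (card T)}"
      then obtain T where T: "T \<in> Pow F" "odd (card T)" "X = \<phi> T" by blast
      have "even (card (\<phi> T))" using par[OF PF[OF T(1)]] T(2) invol by simp
      then show "X \<in> {T \<in> Pow F. even (card T)}" using T PF by auto
    qed
  qed
  ultimately show ?thesis by simp
qed

definition Gf :: "nat set \<Rightarrow> nat \<Rightarrow> int \<Rightarrow> int \<Rightarrow> nat" where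
  "Gf F p i r = (if [r = i] (mod int p) then Ev F else 0) + (if [- r = i] (mod int p) then Od F else 0)"

lemma G_eq: assumes fin: "finite F"
  shows "card {T \<in> Pow F. [(-1) ^ card T * r = i] (mod int p)} = Gf F p i r"
proof -
  have eq: "{T \<in> Pow F. [(-1) ^ card T * r = i] (mod int p)}
     = {T \<in> Pow F. even (card T) \<and> [r = i] (mod int p)} \<union> {T \<in> Pow F. odd (card T) \<and> [- r = i] (mod int p)}"
    by (auto simp: minus_one_power_iff)
  have finP: "finite {T \<in> Pow F. P T}" for P using fin by simp
  have "card {T \<in> Pow F. [(-1) ^ card T * r = i] (mod int p)}
     = card {T \<in> Pow F. even (card T) \<and> [r = i] (mod int p)} + card {T \<in> Pow F. odd (card T) \<and> [- r = i] (mod int p)}"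
    unfolding eq by (rule card_Un_disjoint[OF finP finP]) auto
  then show ?thesis unfolding Gf_def Ev_def Od_def by auto
qed

lemma Gf_cong: "[r = r'] (mod int p) \<Longrightarrow> Gf F p i r = Gf F p i r'"
proof -
  assume c: "[r = r'] (mod int p)"
  have "[r = i] (mod int p) \<longleftrightarrow> [r' = i] (mod int p)" using c by (meson cong_sym cong_trans)
  moreover have "[- r = - r'] (mod int p)" using c by (simp add: cong_minus_minus_iff)
  then have "[- r = i] (mod int p) \<longleftrightarrow> [- r' = i] (mod int p)" by (meson cong_sym cong_trans)
  ultimately show ?thesis unfolding Gf_def by simp
qed

lemma Gf_neg: "Ev F = Od F \<Longrightarrow> Gf F p i (- r) = Gf F p i r"
  unfolding Gf_def minus_minus by simp

lemma Gf_negi: "Ev F = Od F \<Longrightarrow> Gf F p (- i) r = Gf F p i r"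
proof -
  assume e: "Ev F = Od F"
  have "[r = - i] (mod int p) \<longleftrightarrow> [- r = i] (mod int p)"
    using cong_minus_minus_iff[of r "- i" "int p"] by simp
  moreover have "[- r = - i] (mod int p) \<longleftrightarrow> [r = i] (mod int p)"
    using cong_minus_minus_iff[of r i "int p"] by simp
  ultimately show ?thesis unfolding Gf_def using e by auto
qed

lemma R_pair:
  assumes p: "prime p" and V: "V \<subseteq> Us p n"
  shows "[int (R n (Us p n - V)) = (-1) ^ card (Fs p n) * int (R n V)] (mod int p)"
proof -
  let ?U = "Us p n" and ?F = "Fs p n" and ?N = "card (Fs p n)"
  have Vn: "V \<subseteq> {0..<n}" using V by (auto simp: Us_def)
  have e1: "{0..<n} - V = (?U - V) \<union> ?F" using V Fs_sub[of p n] by (auto simp: Us_def)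
  have c: "[int (R n ((?U - V) \<union> ?F)) = (-1) ^ ?N * int (R n (?U - V))] (mod int p)"
    by (rule toggle_sign[OF p]) auto
  then have c2: "[int (R n V) = (-1) ^ ?N * int (R n (?U - V))] (mod int p)"
    using R_compl[OF Vn] e1 by simp
  have "[(-1) ^ ?N * int (R n V) = (-1) ^ ?N * ((-1) ^ ?N * int (R n (?U - V)))] (mod int p)"
    using c2 by (rule cong_scalar_left)
  moreover have "(-1::int) ^ ?N * ((-1) ^ ?N * x) = x" for x by (cases "even ?N") auto
  ultimately show ?thesis by (simp add: cong_sym_eq)
qed

lemma sum_pair:
  fixes h :: "nat set \<Rightarrow> nat"
  assumes fin: "finite U" and z: "z \<in> U" and hp: "\<And>V. V \<subseteq> U \<Longrightarrow> h (U - V) = h V"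
  shows "(\<Sum>V\<in>Pow U. h V) = 2 * (\<Sum>V\<in>{V \<in> Pow U. z \<in> V}. h V)"
proof -
  let ?A = "{V \<in> Pow U. z \<in> V}" and ?B = "{V \<in> Pow U. z \<notin> V}"
  have split: "Pow U = ?A \<union> ?B" by auto
  have finA: "finite ?A" "finite ?B" using fin by auto
  have "(\<Sum>V\<in>Pow U. h V) = (\<Sum>V\<in>?A. h V) + (\<Sum>V\<in>?B. h V)"
    by (subst split, rule sum.union_disjoint) (use finA in auto)
  moreover have "(\<Sum>V\<in>?B. h V) = (\<Sum>V\<in>?A. h (U - V))"
    by (rule sum.reindex_bij_witness[of _ "\<lambda>V. U - V" "\<lambda>V. U - V"]) (use z hp in auto)
  moreover have "(\<Sum>V\<in>?A. h (U - V)) = (\<Sum>V\<in>?A. h V)" using hp by (intro sum.cong) auto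
  ultimately show ?thesis by simp
qed

lemma card_Fs_Qc:
  assumes p: "prime p"
  shows "card (Fs p n) + Qc p n = n + 1"
proof -
  have eq: "{..n} = Fs p n \<union> {s. \<not> p dvd (n choose s)}"
  proof
    show "{..n} \<subseteq> Fs p n \<union> {s. \<not> p dvd (n choose s)}"
    proof
      fix s assume s: "s \<in> {..n}"
      have "p \<noteq> 1" using p by (metis not_prime_1)
      then have "\<not> p dvd 1" by simp
      then show "s \<in> Fs p n \<union> {s. \<not> p dvd (n choose s)}" using s
        by (cases "s = 0 \<or> s = n") (auto simp: Fs_def)
    qed
    show "Fs p n \<union> {s. \<not> p dvd (n choose s)} \<subseteq> {..n}" using Qset_sub[OF p, of n] by (auto simp: Fs_def)
  qed
  have "card {..n} = card (Fs p n) + Qc p n" unfolding Qc_def eq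
    by (rule card_Un_disjoint) (use Fs_fin Qset_finite[OF p] in \<open>auto simp: Fs_def\<close>)
  then show ?thesis by simp
qed

lemma cong0_neg: "[i = 0] (mod (m::int)) \<Longrightarrow> [- r = i] (mod m) \<longleftrightarrow> [r = i] (mod m)"
proof -
  assume "[i = 0] (mod m)"
  then have mi: "m dvd i" by (simp add: cong_0_iff)
  have "[- r = i] (mod m) \<longleftrightarrow> m dvd (- r - i)" by (simp add: cong_iff_dvd_diff)
  also have "\<dots> \<longleftrightarrow> m dvd (r + i)" by (metis dvd_minus_iff minus_diff_eq diff_minus_eq_add add.commute)
  also have "\<dots> \<longleftrightarrow> m dvd r" using mi by (simp add: dvd_add_left_iff)
  also have "\<dots> \<longleftrightarrow> m dvd (r - i)" using mi by (simp add: dvd_diff_left_iff dvd_diff)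
  also have "\<dots> \<longleftrightarrow> [r = i] (mod m)" by (simp add: cong_iff_dvd_diff)
  finally show ?thesis .
qed

theorem corollary4p4:
  fixes p n k :: nat
  assumes "prime p" and "odd p" and "n \<ge> 2"
    and "p ^ k \<le> n" and "n < p ^ (k + 1)"
  shows "(\<not> (\<forall>j<k. digit p n j = p - 1) \<longrightarrow> (\<forall>i::int. cB p i n = cB p (- i) n))
    \<and> (\<forall>i::int.
         (([i = 0] (mod int p) \<or> (\<forall>j<k. digit p n j = p - 1)) \<longrightarrow>
            2 ^ (n + 2 - (\<Prod>j\<le>k. digit p n j + 1)) dvd cB p i n)
       \<and> (\<not> ([i = 0] (mod int p) \<or> (\<forall>j<k. digit p n j = p - 1)) \<longrightarrow>
            2 ^ (n + 1 - (\<Prod>j\<le>k. digit p n j + 1)) dvd cB p i n))"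
proof -
  have p: "prime p" using assms(1) .
  define F where "F = Fs p n"
  define U where "U = Us p n"
  define N where "N = card F"
  have finF: "finite F" unfolding F_def by (rule Fs_fin)
  have finU: "finite U" unfolding U_def by (rule Us_fin)
  have z: "0 \<in> U" unfolding U_def using assms(3) by (intro zero_Us) simp
  have Pq: "(\<Prod>j\<le>k. digit p n j + 1) = Qc p n" using Qc_prod[OF p assms(5)] by simp
  have NQ: "N + Qc p n = n + 1" unfolding N_def F_def by (rule card_Fs_Qc[OF p])
  have allm: "(\<forall>j<k. digit p n j = p - 1) \<longleftrightarrow> N = 0"
    using Qc_full_iff[OF p assms(4,5)] NQ by auto
  have e2: "n + 2 - (\<Prod>j\<le>k. digit p n j + 1) = N + 1" using Pq NQ by simp
  have e1: "n + 1 - (\<Prod>j\<le>k. digit p n j + 1) = N" using Pq NQ by simp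
  have EO: "Ev F + Od F = 2 ^ N" unfolding N_def by (rule EO_sum[OF finF])
  have EOeq: "N \<noteq> 0 \<Longrightarrow> Ev F = Od F" using EO_eq[OF finF] unfolding N_def by fastforce
  define h where "h i V = Gf F p i (int (R n V))" for i V
  have cBeq: "cB p i n = (\<Sum>V\<in>Pow U. h i V)" for i
    unfolding cB_eq_R count_decomp[OF p] h_def U_def F_def
    using G_eq[OF Fs_fin] by simp
  have hp: "h i (U - V) = h i V" if "V \<subseteq> U" for i V
  proof -
    have "[int (R n (U - V)) = (-1) ^ N * int (R n V)] (mod int p)"
      using R_pair[OF p, of V n] that unfolding U_def N_def F_def by simp
    then have a: "h i (U - V) = Gf F p i ((-1) ^ N * int (R n V))" unfolding h_def by (rule Gf_cong)
    show ?thesis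
    proof (cases "even N")
      case True then show ?thesis using a by (simp add: h_def)
    next
      case False
      then have "N \<noteq> 0" by (metis dvd_0_right)
      then show ?thesis using a False Gf_neg[OF EOeq] by (simp add: h_def)
    qed
  qed
  have tot: "cB p i n = 2 * (\<Sum>V\<in>{V \<in> Pow U. 0 \<in> V}. h i V)" for i
    unfolding cBeq by (rule sum_pair[OF finU z]) (rule hp)
  have part1: "\<not> (\<forall>j<k. digit p n j = p - 1) \<longrightarrow> (\<forall>i::int. cB p i n = cB p (- i) n)"
  proof (intro impI allI)
    fix i :: int assume "\<not> (\<forall>j<k. digit p n j = p - 1)"
    then have "N \<noteq> 0" using allm by blast
    then have "h (- i) V = h i V" for V unfolding h_def using Gf_negi[OF EOeq] by simp
    then show "cB p i n = cB p (- i) n" unfolding cBeq by simp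
  qed
  have caseA: "2 ^ (N + 1) dvd cB p i n" if "[i = 0] (mod int p) \<or> N = 0" for i
  proof (cases "N = 0")
    case True then show ?thesis using tot[of i] by simp
  next
    case False
    then have i0: "[i = 0] (mod int p)" using that by simp
    have "2 ^ N dvd h i V" for V
    proof -
      have "h i V = (if [int (R n V) = i] (mod int p) then Ev F + Od F else 0)"
        unfolding h_def Gf_def using cong0_neg[OF i0, of "int (R n V)"] by simp
      then show ?thesis using EO by simp
    qed
    then have "2 ^ N dvd (\<Sum>V\<in>{V \<in> Pow U. 0 \<in> V}. h i V)" by (intro dvd_sum) auto
    then show ?thesis using tot[of i] by simp
  qed
  have caseB: "2 ^ N dvd cB p i n" if "N \<noteq> 0" for i
  proof -
    have E: "Ev F = Od F" using EOeq[OF that] .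
    have "(2::nat) ^ N = 2 * 2 ^ (N - 1)" using that by (cases N) auto
    then have E2: "Ev F = 2 ^ (N - 1)" using EO E by simp
    have "2 ^ (N - 1) dvd h i V" for V unfolding h_def Gf_def using E E2 by simp
    then have "2 ^ (N - 1) dvd (\<Sum>V\<in>{V \<in> Pow U. 0 \<in> V}. h i V)" by (intro dvd_sum) auto
    then have "2 * 2 ^ (N - 1) dvd cB p i n" using tot[of i] by simp
    then show ?thesis using \<open>2 ^ N = 2 * 2 ^ (N - 1)\<close> by simp
  qed
  show ?thesis
    unfolding e1 e2 using part1 caseA caseB allm by auto
qed

end
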